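(* Let $r,i\in\mathbb{Z}$ and $\beta\in\Bbbk^*$ with $\beta^n\ne1$. Then $c_\beta^{r,i}(k,0)\ne0$ for all $0\le k\le n$, and $c_\beta^{r,i}(n,l)=0$ for all $1\le l\le n-1$. (Equivalently: in the lower triangular matrix $\mathcal{A}_\beta^{r,i}(n)=(c_\beta^{r,i}(k,l))_{0\le l\le k\le n}$, all first-column entries are nonzero and the last row is zero except for its first and last entries.)
   Context: $\Bbbk$ is an algebraically closed field of characteristic $0$; $n,w$ positive integers, $\gamma$ a primitive $n$-th root of unity. $H=B(n,w,\gamma)$ is the Hopf algebra generated by $x^{\pm1},g,y$ with relations $xx^{-1}=x^{-1}x=1$, $xg=gx$, $xy=yx$, $yg=\gamma gy$, $y^n=1-x^w=1-g^n$, with $\Delta(y)=y\otimes g+1\otimes y$, $x,g$ group-like, $S(x)=x^{-1}$, $S(g)=g^{-1}$, $S(y)=-yg^{-1}$. The elements $c_\beta^{r,i}(k,l)\in H$ ($0\le l\le k$) are defined by $c_\beta^{r,i}(0,0)=x^rg^i$ and, for $k\ge0$: $c_\beta^{r,i}(k+1,0)=c_\beta^{r,i}(k,0)S(y)+\beta yc_\beta^{r,i}(k,0)S(g)$; for $0<l<k+1$, $c_\beta^{r,i}(k+1,l)=c_\beta^{r,i}(k,l)S(y)+\beta\gamma^{-l}yc_\beta^{r,i}(k,l)S(g)+c_\beta^{r,i}(k,l-1)S(g)$; $c_\beta^{r,i}(k+1,k+1)=c_\beta^{r,i}(k,k)S(g)$. *)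

theory Defs
  imports "HOL-Library.Poly_Mapping" "HOL-Computational_Algebra.Polynomial"
begin

text \<open>
  Concrete model of the Hopf algebra H = B(n,w,gamma) (only its algebra structure is
  needed for the statement).  We use the PBW basis
    x^a g^b y^c,  a :: int,  0 <= b < n,  0 <= c < n,
  so an element of H is a finitely supported coefficient function on the keys (a,b,c).
  The multiplication of basis monomials is derived from the defining relations
  xg = gx, xy = yx, yg = gamma gy, g^n = x^w, y^n = 1 - x^w:
    (x^a g^b y^c)(x^a' g^b' y^c') = gamma^(c b') x^(a+a') g^(b+b') y^(c+c'),
  followed by the reductions g^n = x^w and y^n = 1 - x^w.
\<close>

type_synonym 'k hel = "(int \<times> nat \<times> nat) \<Rightarrow>\<^sub>0 'k"

definition algebraically_closed :: "'k::field itself \<Rightarrow> bool" where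
  "algebraically_closed _ \<longleftrightarrow> (\<forall>p :: 'k poly. degree p > 0 \<longrightarrow> (\<exists>z. poly p z = 0))"

definition primitive_root :: "nat \<Rightarrow> 'k::field \<Rightarrow> bool" where
  "primitive_root n \<gamma> \<longleftrightarrow> \<gamma> ^ n = 1 \<and> (\<forall>m. 0 < m \<and> m < n \<longrightarrow> \<gamma> ^ m \<noteq> 1)"

definition mono_mult :: "nat \<Rightarrow> nat \<Rightarrow> 'k::field \<Rightarrow> 'k
     \<Rightarrow> int \<times> nat \<times> nat \<Rightarrow> int \<times> nat \<times> nat \<Rightarrow> 'k hel" where
  "mono_mult n w \<gamma> s p q =
     (case p of (a, b, c) \<Rightarrow> case q of (a', b', c') \<Rightarrow>
       let t = s * \<gamma> ^ (c * b');
           B = b + b'; C = c + c';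
           A = a + a' + (if n \<le> B then int w else 0);
           B' = (if n \<le> B then B - n else B)
       in if n \<le> C
          then Poly_Mapping.single (A, B', C - n) t - Poly_Mapping.single (A + int w, B', C - n) t
          else Poly_Mapping.single (A, B', C) t)"

definition hmult :: "nat \<Rightarrow> nat \<Rightarrow> 'k::field \<Rightarrow> 'k hel \<Rightarrow> 'k hel \<Rightarrow> 'k hel" where
  "hmult n w \<gamma> f h =
     (\<Sum>p\<in>Poly_Mapping.keys f. \<Sum>q\<in>Poly_Mapping.keys h. mono_mult n w \<gamma> (Poly_Mapping.lookup f p * Poly_Mapping.lookup h q) p q)"

definition hscale :: "'k::field \<Rightarrow> 'k hel \<Rightarrow> 'k hel" where
  "hscale \<beta> f = Poly_Mapping.map (\<lambda>v. \<beta> * v) f"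

text \<open>The element x^r g^i of H for r, i :: int (g is invertible since g^n = x^w).\<close>
definition hxg :: "nat \<Rightarrow> nat \<Rightarrow> int \<Rightarrow> int \<Rightarrow> 'k::field hel" where
  "hxg n w r i = Poly_Mapping.single (r + int w * (i div int n), nat (i mod int n), 0) 1"

text \<open>The generator y (for n = 1 one has y = y^1 = 1 - x^w).\<close>
definition hy :: "nat \<Rightarrow> nat \<Rightarrow> 'k::field hel" where
  "hy n w = (if n = 1 then Poly_Mapping.single (0, 0, 0) 1 - Poly_Mapping.single (int w, 0, 0) 1
             else Poly_Mapping.single (0, 0, 1) 1)"

text \<open>Antipode values S(g) = g^{-1} and S(y) = - y g^{-1}.\<close>
definition hSg :: "nat \<Rightarrow> nat \<Rightarrow> 'k::field hel" where
  "hSg n w = hxg n w 0 (-1)"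

definition hSy :: "nat \<Rightarrow> nat \<Rightarrow> 'k::field \<Rightarrow> 'k hel" where
  "hSy n w \<gamma> = - hmult n w \<gamma> (hy n w) (hSg n w)"

text \<open>The elements c_beta^{r,i}(k,l); values for l > k are set to 0 (unused).\<close>
fun cel :: "nat \<Rightarrow> nat \<Rightarrow> 'k::field \<Rightarrow> 'k \<Rightarrow> int \<Rightarrow> int \<Rightarrow> nat \<Rightarrow> nat \<Rightarrow> 'k hel" where
  "cel n w \<gamma> \<beta> r i 0 l = (if l = 0 then hxg n w r i else 0)"
| "cel n w \<gamma> \<beta> r i (Suc k) l =
     (if l = 0 then
        hmult n w \<gamma> (cel n w \<gamma> \<beta> r i k 0) (hSy n w \<gamma>)
        + hscale \<beta> (hmult n w \<gamma> (hmult n w \<gamma> (hy n w) (cel n w \<gamma> \<beta> r i k 0)) (hSg n w))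
      else if l < Suc k then
        hmult n w \<gamma> (cel n w \<gamma> \<beta> r i k l) (hSy n w \<gamma>)
        + hscale (\<beta> * inverse \<gamma> ^ l)
            (hmult n w \<gamma> (hmult n w \<gamma> (hy n w) (cel n w \<gamma> \<beta> r i k l)) (hSg n w))
        + hmult n w \<gamma> (cel n w \<gamma> \<beta> r i k (l - 1)) (hSg n w)
      else if l = Suc k then
        hmult n w \<gamma> (cel n w \<gamma> \<beta> r i k k) (hSg n w)
      else 0)"

end

theory Submission
  imports Defs
begin


fun qb :: "'a::field \<Rightarrow> nat \<Rightarrow> nat \<Rightarrow> 'a" where
  "qb q k 0 = 1"
| "qb q 0 (Suc l) = 0"
| "qb q (Suc k) (Suc l) = q ^ Suc l * qb q k (Suc l) + qb q k l"

lemma qb_gt: "k < l \<Longrightarrow> qb q k l = 0"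
proof (induction k arbitrary: l)
  case 0 then show ?case by (cases l) auto
next
  case (Suc k) then show ?case by (cases l) auto
qed

lemma qb_diag: "qb q k k = 1"
  by (induction k) (auto simp: qb_gt)

lemma qb_P2: "qb q (Suc k) (Suc l) = qb q k (Suc l) + q ^ (k - l) * qb q k l"
proof (induction k arbitrary: l)
  case 0 then show ?case by (cases l) auto
next
  case (Suc k)
  show ?case
  proof (cases l)
    case 0
    have "qb q (Suc k) (Suc 0) = qb q k (Suc 0) + q ^ k" using Suc[of 0] by simp
    then show ?thesis using 0 by (simp add: algebra_simps)
  next
    case (Suc l')
    have h1: "qb q (Suc k) (Suc l) = qb q k (Suc l) + q ^ (k - l) * qb q k l" using Suc.IH[of l] .
    have h2: "qb q (Suc k) l = qb q k l + q ^ (k - l') * qb q k l'" using Suc.IH[of l'] Suc by simp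
    show ?thesis
    proof (cases "l' < k")
      case True
      have e: "k - l' = Suc (k - l)" using True Suc by simp
      have d1: "qb q (Suc (Suc k)) (Suc l) = q ^ Suc l * qb q (Suc k) (Suc l) + qb q (Suc k) l"
        by (rule qb.simps(3))
      have d2: "qb q (Suc k) (Suc l) = q ^ Suc l * qb q k (Suc l) + qb q k l"
        by (rule qb.simps(3))
      have d3: "qb q (Suc k) l = q ^ l * qb q k l + qb q k l'"
        using Suc by simp
      have e2: "Suc k - l = Suc (k - l)" using True Suc by simp
      have kl: "k = l + (k - l)" using True Suc by simp
      have "qb q (Suc (Suc k)) (Suc l) = q ^ Suc l * (qb q k (Suc l) + q ^ (k - l) * qb q k l) + (qb q k l + q ^ Suc (k - l) * qb q k l')"
        unfolding d1 h1 h2 e ..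
      also have "\<dots> = (q ^ Suc l * qb q k (Suc l) + qb q k l) + q ^ Suc (k - l) * (q ^ l * qb q k l + qb q k l')"
        by (subst (2) kl) (simp add: algebra_simps power_add)
      also have "\<dots> = qb q (Suc k) (Suc l) + q ^ (Suc k - l) * qb q (Suc k) l"
        unfolding d2 d3 e2 ..
      finally show ?thesis .
    next
      case False
      then have "k < Suc l \<and> (k = l' \<or> k < l')" using Suc by auto
      then show ?thesis using Suc by (auto simp: qb_gt qb_diag)
    qed
  qed
qed

lemma qb_R: "(q ^ Suc l - 1) * qb q k (Suc l) = (q ^ (k - l) - 1) * qb q k l"
  using qb_P2[of q k l] qb.simps(3)[of q k l] by (simp add: algebra_simps)

lemma qb_vanish:
  assumes "q ^ n = 1" "\<And>j. 0 < j \<Longrightarrow> j < n \<Longrightarrow> q ^ j \<noteq> 1" "0 < l" "l < n"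
  shows "qb q n l = 0"
proof -
  obtain m where m: "n = Suc m" using assms by (cases n) auto
  obtain l' where l': "l = Suc l'" using assms by (cases l) auto
  have le: "l' \<le> m" using assms m l' by simp
  have "(q ^ l - 1) * qb q n l = (q ^ l - 1) * (qb q m l + q ^ (m - l') * qb q m l')"
    using qb_P2[of q m l'] m l' by simp
  also have "\<dots> = (q ^ (m - l') - 1) * qb q m l' + (q ^ l - 1) * q ^ (m - l') * qb q m l'"
    using qb_R[of q l' m] l' by (simp add: algebra_simps)
  also have "\<dots> = (q ^ (m - l' + l) - 1) * qb q m l'"
    by (simp add: algebra_simps power_add)
  also have "m - l' + l = n" using le m l' by simp
  finally have "(q ^ l - 1) * qb q n l = 0" using assms by simp
  moreover have "q ^ l - 1 \<noteq> 0" using assms by simp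
  ultimately show ?thesis by simp
qed

fun Zr :: "'a::field \<Rightarrow> 'a \<Rightarrow> nat \<Rightarrow> nat \<Rightarrow> 'a" where
  "Zr q u l 0 = 1"
| "Zr q u l (Suc d) = Zr q u l d * (q ^ Suc d * (u * q ^ (l + d) - 1))"

lemma Zr_shift: "Zr q u l (Suc d) = q * (u * q ^ l - 1) * q ^ d * Zr q u (Suc l) d"
proof (induction d)
  case 0 then show ?case by (simp add: algebra_simps)
next
  case (Suc d)
  have "Zr q u l (Suc (Suc d)) = Zr q u l (Suc d) * (q ^ Suc (Suc d) * (u * q ^ (l + Suc d) - 1))"
    by (rule Zr.simps(2))
  also have "\<dots> = q * (u * q ^ l - 1) * q ^ d * Zr q u (Suc l) d * (q ^ Suc (Suc d) * (u * q ^ (l + Suc d) - 1))"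
    using Suc.IH by simp
  also have "\<dots> = q * (u * q ^ l - 1) * q ^ Suc d * Zr q u (Suc l) (Suc d)"
    by (simp add: algebra_simps)
  finally show ?case .
qed

fun aa :: "'a::field \<Rightarrow> 'a \<Rightarrow> nat \<Rightarrow> nat \<Rightarrow> 'a" where
  "aa q u 0 l = (if l = 0 then 1 else 0)"
| "aa q u (Suc k) l = (if l = 0 then q ^ Suc k * (u * q ^ k - 1) * aa q u k 0
     else if l < Suc k then q ^ (Suc k - l) * ((u * q ^ (k + l) - 1) * aa q u k l + aa q u k (l - 1))
     else if l = Suc k then aa q u k k else 0)"

lemma aa_closed: "l \<le> k \<Longrightarrow> aa q u k l = qb q k l * Zr q u l (k - l)"
proof (induction k arbitrary: l)
  case 0 then show ?case by simp
next
  case (Suc k)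
  consider "l = 0" | "0 < l" "l < Suc k" | "l = Suc k" using Suc.prems by linarith
  then show ?case
  proof cases
    case 1 then show ?thesis using Suc.IH[of 0] by (simp add: algebra_simps)
  next
    case 2
    then obtain l' where l': "l = Suc l'" by (cases l) auto
    define d where "d = k - l"
    have kd: "k = l + d" using 2 d_def by simp
    have IH1: "aa q u k l = qb q k l * Zr q u l d" using Suc.IH[of l] 2 d_def by simp
    have IH2: "aa q u k l' = qb q k l' * Zr q u l' (Suc d)" using Suc.IH[of l'] 2 l' kd by simp
    have Z1: "Zr q u l' (Suc d) = q * (u * q ^ l' - 1) * q ^ d * Zr q u l d"
      using Zr_shift[of q u l' d] l' by simp
    have P1: "qb q (Suc k) l = q ^ l * qb q k l + qb q k l'" using l' by simp
    have P2: "qb q (Suc k) l = qb q k l + q ^ (Suc d) * qb q k l'"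
      using qb_P2[of q k l'] l' kd by simp
    have key: "qb q (Suc k) l * (u * q ^ k - 1) = (u * q ^ (k + l) - 1) * qb q k l + q ^ Suc d * (u * q ^ l' - 1) * qb q k l'"
    proof -
      have "qb q (Suc k) l * (u * q ^ k - 1) = u * q ^ k * qb q (Suc k) l - qb q (Suc k) l"
        by (simp add: algebra_simps)
      also have "\<dots> = u * q ^ k * (q ^ l * qb q k l + qb q k l') - (qb q k l + q ^ (Suc d) * qb q k l')"
        by (simp only: P1[symmetric] P2[symmetric])
      also have "\<dots> = (u * q ^ (k + l) - 1) * qb q k l + q ^ Suc d * (u * q ^ l' - 1) * qb q k l'"
        using kd l' by (simp add: algebra_simps power_add)
      finally show ?thesis .
    qed
    have sd: "Suc k - l = Suc d" using kd by simp
    have "aa q u (Suc k) l = q ^ Suc d * ((u * q ^ (k + l) - 1) * aa q u k l + aa q u k l')"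
      using 2 l' sd by simp
    also have "\<dots> = q ^ Suc d * Zr q u l d * ((u * q ^ (k + l) - 1) * qb q k l + q ^ Suc d * (u * q ^ l' - 1) * qb q k l')"
      by (simp only: IH1 IH2 Z1) (simp add: algebra_simps)
    also have "\<dots> = q ^ Suc d * Zr q u l d * (qb q (Suc k) l * (u * q ^ k - 1))"
      by (simp only: key)
    also have "\<dots> = qb q (Suc k) l * Zr q u l (Suc k - l)"
      unfolding sd Zr.simps(2) using kd by (simp add: algebra_simps)
    finally show ?thesis .
  next
    case 3 then show ?thesis using Suc.IH[of k] by (simp add: qb_diag)
  qed
qed

lemma aa_vanish:
  assumes "q ^ n = 1" "\<And>j. 0 < j \<Longrightarrow> j < n \<Longrightarrow> q ^ j \<noteq> 1" "0 < l" "l < n"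
  shows "aa q u n l = 0"
  using aa_closed[of l n q u] qb_vanish[OF assms] assms by simp

lemma aa_nz0:
  assumes "q \<noteq> 0" "\<And>j. u * q ^ j \<noteq> 1"
  shows "aa q u k 0 \<noteq> 0"
  using assms by (induction k) auto



definition kk :: "nat \<Rightarrow> nat \<Rightarrow> int \<Rightarrow> int \<Rightarrow> nat \<Rightarrow> int \<times> nat \<times> nat" where
  "kk n w r m j = (r + int w * (m div int n), nat (m mod int n), j)"

lemma mono_mult_zero: "mono_mult n w \<gamma> 0 p p' = 0"
  by (cases p; cases p') (simp add: mono_mult_def Let_def)

lemma mono_mult_diff: "mono_mult n w \<gamma> (s - t) p p' = mono_mult n w \<gamma> s p p' - mono_mult n w \<gamma> t p p'"
  by (cases p; cases p') (simp add: mono_mult_def Let_def left_diff_distrib single_diff)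

lemma hmult_sup:
  assumes "finite S" "Poly_Mapping.keys f \<subseteq> S" "finite T" "Poly_Mapping.keys h \<subseteq> T"
  shows "hmult n w \<gamma> f h = (\<Sum>p\<in>S. \<Sum>q\<in>T. mono_mult n w \<gamma> (Poly_Mapping.lookup f p * Poly_Mapping.lookup h q) p q)"
proof -
  have inner: "(\<Sum>q\<in>Poly_Mapping.keys h. mono_mult n w \<gamma> (Poly_Mapping.lookup f p * Poly_Mapping.lookup h q) p q)
      = (\<Sum>q\<in>T. mono_mult n w \<gamma> (Poly_Mapping.lookup f p * Poly_Mapping.lookup h q) p q)" for p
    by (rule sum.mono_neutral_left) (use assms in \<open>auto simp: in_keys_iff mono_mult_zero\<close>)
  have "hmult n w \<gamma> f h = (\<Sum>p\<in>Poly_Mapping.keys f. \<Sum>q\<in>T. mono_mult n w \<gamma> (Poly_Mapping.lookup f p * Poly_Mapping.lookup h q) p q)"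
    unfolding hmult_def inner ..
  also have "\<dots> = (\<Sum>p\<in>S. \<Sum>q\<in>T. mono_mult n w \<gamma> (Poly_Mapping.lookup f p * Poly_Mapping.lookup h q) p q)"
    by (rule sum.mono_neutral_left) (use assms in \<open>auto simp: in_keys_iff mono_mult_zero\<close>)
  finally show ?thesis .
qed

lemma hmult_diff_left: "hmult n w \<gamma> (f - g) h = hmult n w \<gamma> f h - hmult n w \<gamma> g h"
proof -
  let ?S = "Poly_Mapping.keys f \<union> Poly_Mapping.keys g"
  let ?T = "Poly_Mapping.keys h"
  have "hmult n w \<gamma> (f - g) h = (\<Sum>p\<in>?S. \<Sum>q\<in>?T. mono_mult n w \<gamma> (Poly_Mapping.lookup (f - g) p * Poly_Mapping.lookup h q) p q)"
    by (rule hmult_sup) (auto simp: keys_diff)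
  also have "\<dots> = (\<Sum>p\<in>?S. \<Sum>q\<in>?T. mono_mult n w \<gamma> (Poly_Mapping.lookup f p * Poly_Mapping.lookup h q) p q)
     - (\<Sum>p\<in>?S. \<Sum>q\<in>?T. mono_mult n w \<gamma> (Poly_Mapping.lookup g p * Poly_Mapping.lookup h q) p q)"
    by (simp add: lookup_minus left_diff_distrib mono_mult_diff sum_subtractf)
  also have "\<dots> = hmult n w \<gamma> f h - hmult n w \<gamma> g h"
    by (subst (1 2) hmult_sup[where S = ?S and T = ?T]) auto
  finally show ?thesis .
qed

lemma hmult_diff_right: "hmult n w \<gamma> h (f - g) = hmult n w \<gamma> h f - hmult n w \<gamma> h g"
proof -
  let ?S = "Poly_Mapping.keys f \<union> Poly_Mapping.keys g"
  let ?T = "Poly_Mapping.keys h"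
  have "hmult n w \<gamma> h (f - g) = (\<Sum>q\<in>?T. \<Sum>p\<in>?S. mono_mult n w \<gamma> (Poly_Mapping.lookup h q * Poly_Mapping.lookup (f - g) p) q p)"
    by (rule hmult_sup) (auto simp: keys_diff)
  also have "\<dots> = (\<Sum>q\<in>?T. \<Sum>p\<in>?S. mono_mult n w \<gamma> (Poly_Mapping.lookup h q * Poly_Mapping.lookup f p) q p)
     - (\<Sum>q\<in>?T. \<Sum>p\<in>?S. mono_mult n w \<gamma> (Poly_Mapping.lookup h q * Poly_Mapping.lookup g p) q p)"
    by (simp add: lookup_minus right_diff_distrib mono_mult_diff sum_subtractf)
  also have "\<dots> = hmult n w \<gamma> h f - hmult n w \<gamma> h g"
    by (subst (1 2) hmult_sup[where S = ?T and T = ?S]) auto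
  finally show ?thesis .
qed

lemma hmult_zero_right: "hmult n w \<gamma> h 0 = 0"
  by (simp add: hmult_def)

lemma hmult_uminus_right: "hmult n w \<gamma> h (- f) = - hmult n w \<gamma> h f"
  using hmult_diff_right[of n w \<gamma> h 0 f] by (simp add: hmult_zero_right)

lemma hmult_single: "hmult n w \<gamma> (Poly_Mapping.single p s) (Poly_Mapping.single p' t) = mono_mult n w \<gamma> (s * t) p p'"
  by (cases "s = 0"; cases "t = 0") (simp_all add: hmult_def mono_mult_zero)

lemma hscale_single: "hscale \<beta> (Poly_Mapping.single p s) = Poly_Mapping.single p (\<beta> * s)"
  by (simp add: hscale_def)

lemma lookup_hscale: "Poly_Mapping.lookup (hscale \<beta> f) k = \<beta> * Poly_Mapping.lookup f k"
  by (simp add: hscale_def map.rep_eq when_def)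

lemma hSg_eq: "2 \<le> n \<Longrightarrow> hSg n w = Poly_Mapping.single (- int w, n - 1, 0) 1"
proof -
  assume n: "2 \<le> n"
  have d: "(-1::int) div int n = -1" by (rule int_div_pos_eq[of _ _ _ "int n - 1"]) (use n in auto)
  have m: "(-1::int) mod int n = int n - 1" by (rule int_mod_pos_eq[of _ _ "-1"]) (use n in auto)
  show ?thesis using n by (simp add: hSg_def hxg_def d m nat_diff_distrib)
qed

lemma hy_eq: "2 \<le> n \<Longrightarrow> hy n w = Poly_Mapping.single (0, 0, 1) 1"
  by (simp add: hy_def)

lemma hSy_eq: "2 \<le> n \<Longrightarrow> hSy n w \<gamma> = Poly_Mapping.single (- int w, n - 1, 1) (- (\<gamma> ^ (n - 1)))"
  by (simp add: hSy_def hy_eq hSg_eq hmult_single mono_mult_def Let_def single_uminus)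

lemma L_gen:
  assumes "2 \<le> n" "j + c < n"
  shows "mono_mult n w \<gamma> s (kk n w r m j) (- int w, n - 1, c) = Poly_Mapping.single (kk n w r (m - 1) (j + c)) (s * \<gamma> ^ (j * (n - 1)))"
proof -
  have dm: "m = int n * (m div int n) + m mod int n" by simp
  have m0: "0 \<le> m mod int n" "m mod int n < int n" using assms by auto
  show ?thesis
  proof (cases "m mod int n = 0")
    case True
    have d: "(m - 1) div int n = m div int n - 1"
      by (rule int_div_pos_eq[of _ _ _ "int n - 1"]) (use assms True dm in \<open>auto simp: algebra_simps\<close>)
    have md: "(m - 1) mod int n = int n - 1"
      by (rule int_mod_pos_eq[of _ _ "m div int n - 1"]) (use assms True dm in \<open>auto simp: algebra_simps\<close>)
    show ?thesis using assms True by (simp add: mono_mult_def kk_def Let_def d md nat_diff_distrib algebra_simps)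
  next
    case False
    have m1: "1 \<le> m mod int n" using False m0 by linarith
    have m2: "m mod int n - 1 < int n" using m0 by linarith
    have d: "(m - 1) div int n = m div int n"
      by (rule int_div_pos_eq[of _ _ _ "m mod int n - 1"]) (use assms m1 m2 dm in \<open>auto simp: algebra_simps\<close>)
    have md: "(m - 1) mod int n = m mod int n - 1"
      by (rule int_mod_pos_eq[of _ _ "m div int n"]) (use assms m1 m2 dm in \<open>auto simp: algebra_simps\<close>)
    have ge: "n \<le> nat (m mod int n) + (n - 1)" using False m0 by linarith
    have e: "nat (m mod int n) + (n - 1) - n = nat (m mod int n - 1)" using False m0 assms by linarith
    show ?thesis using assms False ge e by (simp add: mono_mult_def kk_def Let_def d md algebra_simps)
  qed
qed

lemma Ly:
  assumes "2 \<le> n" "j + 1 < n"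
  shows "mono_mult n w \<gamma> s (0, 0, 1) (kk n w r m j) = Poly_Mapping.single (kk n w r m (j + 1)) (s * \<gamma> ^ nat (m mod int n))"
proof -
  have "nat (m mod int n) < n" using assms by (simp add: nat_less_iff)
  then show ?thesis using assms by (simp add: mono_mult_def kk_def Let_def)
qed


lemma S1:
  assumes "2 \<le> n" "j + 1 < n"
  shows "hmult n w \<gamma> (Poly_Mapping.single (kk n w r m j) s) (hSy n w \<gamma>) =
    Poly_Mapping.single (kk n w r (m - 1) (j + 1)) (s * - (\<gamma> ^ (n - 1)) * \<gamma> ^ (j * (n - 1)))"
  unfolding hSy_eq[OF assms(1)] hmult_single by (rule L_gen[OF assms])

lemma S3:
  assumes "2 \<le> n" "j < n"
  shows "hmult n w \<gamma> (Poly_Mapping.single (kk n w r m j) s) (hSg n w) =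
    Poly_Mapping.single (kk n w r (m - 1) j) (s * 1 * \<gamma> ^ (j * (n - 1)))"
  unfolding hSg_eq[OF assms(1)] hmult_single using L_gen[OF assms(1), of j 0] assms(2) by simp_all

lemma S2:
  assumes "2 \<le> n" "j + 1 < n"
  shows "hmult n w \<gamma> (hmult n w \<gamma> (hy n w) (Poly_Mapping.single (kk n w r m j) s)) (hSg n w) =
    Poly_Mapping.single (kk n w r (m - 1) (j + 1)) (1 * s * \<gamma> ^ nat (m mod int n) * 1 * \<gamma> ^ ((j + 1) * (n - 1)))"
  unfolding hy_eq[OF assms(1)] hmult_single Ly[OF assms] by (rule S3) (use assms in simp_all)


lemma L_genR:
  assumes "2 \<le> n" "j + c = n" "c \<le> 1"
  shows "mono_mult n w \<gamma> s (kk n w r m j) (- int w, n - 1, c) =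
     Poly_Mapping.single (kk n w r (m - 1) 0) (s * \<gamma> ^ (j * (n - 1)))
   - Poly_Mapping.single (kk n w (r + int w) (m - 1) 0) (s * \<gamma> ^ (j * (n - 1)))"
proof -
  have dm: "m = int n * (m div int n) + m mod int n" by simp
  have m0: "0 \<le> m mod int n" "m mod int n < int n" using assms by auto
  show ?thesis
  proof (cases "m mod int n = 0")
    case True
    have d: "(m - 1) div int n = m div int n - 1"
      by (rule int_div_pos_eq[of _ _ _ "int n - 1"]) (use assms True dm in \<open>auto simp: algebra_simps\<close>)
    have md: "(m - 1) mod int n = int n - 1"
      by (rule int_mod_pos_eq[of _ _ "m div int n - 1"]) (use assms True dm in \<open>auto simp: algebra_simps\<close>)
    show ?thesis using assms True by (simp add: mono_mult_def kk_def Let_def d md nat_diff_distrib algebra_simps)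
  next
    case False
    have m1: "1 \<le> m mod int n" using False m0 by linarith
    have m2: "m mod int n - 1 < int n" using m0 by linarith
    have d: "(m - 1) div int n = m div int n"
      by (rule int_div_pos_eq[of _ _ _ "m mod int n - 1"]) (use assms m1 m2 dm in \<open>auto simp: algebra_simps\<close>)
    have md: "(m - 1) mod int n = m mod int n - 1"
      by (rule int_mod_pos_eq[of _ _ "m div int n"]) (use assms m1 m2 dm in \<open>auto simp: algebra_simps\<close>)
    have ge: "n \<le> nat (m mod int n) + (n - 1)" using False m0 by linarith
    have e: "nat (m mod int n) + (n - 1) - n = nat (m mod int n - 1)" using False m0 assms by linarith
    show ?thesis using assms False ge e by (simp add: mono_mult_def kk_def Let_def d md algebra_simps)
  qed
qed

lemma LyR:
  assumes "2 \<le> n" "j + 1 = n"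
  shows "mono_mult n w \<gamma> s (0, 0, 1) (kk n w r m j) =
    Poly_Mapping.single (kk n w r m 0) (s * \<gamma> ^ nat (m mod int n))
  - Poly_Mapping.single (kk n w (r + int w) m 0) (s * \<gamma> ^ nat (m mod int n))"
proof -
  have "nat (m mod int n) < n" using assms by (simp add: nat_less_iff)
  then show ?thesis using assms by (simp add: mono_mult_def kk_def Let_def algebra_simps)
qed

lemma S1R:
  assumes "2 \<le> n" "j + 1 = n"
  shows "hmult n w \<gamma> (Poly_Mapping.single (kk n w r m j) s) (hSy n w \<gamma>) =
    Poly_Mapping.single (kk n w r (m - 1) 0) (s * - (\<gamma> ^ (n - 1)) * \<gamma> ^ (j * (n - 1)))
  - Poly_Mapping.single (kk n w (r + int w) (m - 1) 0) (s * - (\<gamma> ^ (n - 1)) * \<gamma> ^ (j * (n - 1)))"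
  unfolding hSy_eq[OF assms(1)] hmult_single by (rule L_genR) (use assms in auto)

lemma S2R:
  assumes "2 \<le> n" "j + 1 = n"
  shows "hmult n w \<gamma> (hmult n w \<gamma> (hy n w) (Poly_Mapping.single (kk n w r m j) s)) (hSg n w) =
    Poly_Mapping.single (kk n w r (m - 1) 0) (1 * s * \<gamma> ^ nat (m mod int n) * 1 * \<gamma> ^ (0 * (n - 1)))
  - Poly_Mapping.single (kk n w (r + int w) (m - 1) 0) (1 * s * \<gamma> ^ nat (m mod int n) * 1 * \<gamma> ^ (0 * (n - 1)))"
proof -
  have z: "0 < n" using assms by simp
  show ?thesis
    unfolding hy_eq[OF assms(1)] hmult_single LyR[OF assms] hmult_diff_left S3[OF assms(1) z] ..
qed



lemma pw_mod:
  fixes \<gamma> :: "'k::field"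
  assumes "\<gamma> ^ n = 1" "0 < n"
  shows "\<gamma> ^ nat (m mod int n) = \<gamma> powi m"
proof -
  have g0: "\<gamma> \<noteq> 0" using assms by (metis power_0_left less_not_refl2 zero_neq_one)
  have "\<gamma> powi m = \<gamma> powi (int n * (m div int n) + m mod int n)" by simp
  also have "\<dots> = \<gamma> powi (int n * (m div int n)) * \<gamma> powi (m mod int n)"
    using g0 by (rule power_int_add[OF disjI1])
  also have "\<gamma> powi (int n * (m div int n)) = 1"
    by (simp add: power_int_mult assms(1))
  also have "\<gamma> powi (m mod int n) = \<gamma> ^ nat (m mod int n)"
    using assms by (simp add: power_int_nonneg_exp)
  finally show ?thesis by simp
qed

lemma GQ:
  fixes \<gamma> :: "'k::field"
  assumes "\<gamma> ^ n = 1" "0 < n"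
  shows "\<gamma> ^ nat ((i - int k) mod int n) = \<gamma> ^ nat (i mod int n) * (\<gamma> ^ (n - 1)) ^ k"
proof -
  have g0: "\<gamma> \<noteq> 0" using assms by (metis power_0_left less_not_refl2 zero_neq_one)
  have inv: "\<gamma> ^ (n - 1) * \<gamma> = 1" using assms by (metis power_Suc2 Suc_diff_1)
  have "\<gamma> ^ nat ((i - int k) mod int n) = \<gamma> powi (i - int k)" by (rule pw_mod[OF assms])
  also have "\<dots> = \<gamma> powi i / \<gamma> ^ k" using g0 by (simp add: power_int_diff)
  also have "\<dots> = \<gamma> powi i * (\<gamma> ^ (n - 1)) ^ k"
  proof -
    have "(\<gamma> ^ (n - 1)) ^ k * \<gamma> ^ k = 1" using inv by (metis power_mult_distrib power_one)
    then show ?thesis using g0 by (simp add: field_simps)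
  qed
  also have "\<gamma> powi i = \<gamma> ^ nat (i mod int n)" by (rule pw_mod[OF assms, symmetric])
  finally show ?thesis .
qed

lemma gpow: "(\<gamma>::'k::field) ^ (j * (n - 1)) = (\<gamma> ^ (n - 1)) ^ j"
  by (metis power_mult mult.commute)

lemma cel_form:
  fixes \<gamma> \<beta> :: "'k::field"
  assumes n2: "2 \<le> n" and gn: "\<gamma> ^ n = 1"
  shows "k \<le> n \<Longrightarrow> l \<le> k \<Longrightarrow> k - l < n \<Longrightarrow> cel n w \<gamma> \<beta> r i k l =
     Poly_Mapping.single (kk n w r (i - int k) (k - l)) (aa (\<gamma> ^ (n - 1)) (\<beta> * \<gamma> ^ nat (i mod int n)) k l)"
proof (induction k arbitrary: l)
  case 0 then show ?case by (simp add: hxg_def kk_def)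
next
  case (Suc k)
  define Q where "Q = \<gamma> ^ (n - 1)"
  define U where "U = \<beta> * \<gamma> ^ nat (i mod int n)"
  have n0: "0 < n" using n2 by simp
  have invg: "inverse \<gamma> = Q"
  proof -
    have "\<gamma> * Q = 1" unfolding Q_def using gn n0 by (metis power_Suc Suc_diff_1)
    then show ?thesis by (simp add: inverse_unique)
  qed
  have G: "\<gamma> ^ nat ((i - int k) mod int n) = \<gamma> ^ nat (i mod int n) * Q ^ k"
    unfolding Q_def by (rule GQ[OF gn n0])
  have ik: "i - int k - 1 = i - int (Suc k)" by simp
  have kn: "k < n" using Suc.prems by simp
  note simps = hSy_eq[OF n2] hSg_eq[OF n2] hy_eq[OF n2] hmult_single hscale_single
  consider "l = 0" | "0 < l" "l < Suc k" | "l = Suc k" using Suc.prems by linarith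
  then show ?case
  proof cases
    case 1
    have k1: "k + 1 < n" using Suc.prems 1 by simp
    have IH: "cel n w \<gamma> \<beta> r i k 0 = Poly_Mapping.single (kk n w r (i - int k) k) (aa Q U k 0)"
      using Suc.IH[of 0] kn unfolding Q_def U_def by simp
    have "cel n w \<gamma> \<beta> r i (Suc k) 0 = hmult n w \<gamma> (cel n w \<gamma> \<beta> r i k 0) (hSy n w \<gamma>)
        + hscale \<beta> (hmult n w \<gamma> (hmult n w \<gamma> (hy n w) (cel n w \<gamma> \<beta> r i k 0)) (hSg n w))" by simp
    also have "\<dots> = Poly_Mapping.single (kk n w r (i - int k - 1) (k + 1))
        (aa Q U k 0 * - (\<gamma> ^ (n - 1)) * \<gamma> ^ (k * (n - 1)) + \<beta> * (1 * aa Q U k 0 * \<gamma> ^ nat ((i - int k) mod int n) * 1 * \<gamma> ^ ((k + 1) * (n - 1))))"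
      unfolding IH S1[OF n2 k1] S2[OF n2 k1] hscale_single single_add ..
    also have "aa Q U k 0 * - (\<gamma> ^ (n - 1)) * \<gamma> ^ (k * (n - 1)) + \<beta> * (1 * aa Q U k 0 * \<gamma> ^ nat ((i - int k) mod int n) * 1 * \<gamma> ^ ((k + 1) * (n - 1)))
       = aa Q U (Suc k) 0"
      unfolding G gpow Q_def[symmetric] by (simp add: U_def algebra_simps power_add)
    finally show ?thesis using 1 unfolding ik by (simp add: Q_def U_def)
  next
    case 2
    have IH1: "cel n w \<gamma> \<beta> r i k l = Poly_Mapping.single (kk n w r (i - int k) (k - l)) (aa Q U k l)"
      using Suc.IH[of l] kn 2 unfolding Q_def U_def by simp
    have IH2: "cel n w \<gamma> \<beta> r i k (l - 1) = Poly_Mapping.single (kk n w r (i - int k) (Suc k - l)) (aa Q U k (l - 1))"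
      using Suc.IH[of "l - 1"] kn 2 Suc.prems unfolding Q_def U_def by (simp add: Suc_diff_le)
    have k1: "k - l + 1 < n" using Suc.prems 2 by simp
    have e: "k - l + 1 = Suc k - l" using 2 by simp
    have k1': "k - l < n" using k1 by simp
    have k2: "Suc k - l < n" using k1 e by simp
    have "cel n w \<gamma> \<beta> r i (Suc k) l = hmult n w \<gamma> (cel n w \<gamma> \<beta> r i k l) (hSy n w \<gamma>)
        + hscale (\<beta> * inverse \<gamma> ^ l) (hmult n w \<gamma> (hmult n w \<gamma> (hy n w) (cel n w \<gamma> \<beta> r i k l)) (hSg n w))
        + hmult n w \<gamma> (cel n w \<gamma> \<beta> r i k (l - 1)) (hSg n w)" using 2 by simp
    also have "\<dots> = Poly_Mapping.single (kk n w r (i - int k - 1) (k - l + 1))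
        (aa Q U k l * - (\<gamma> ^ (n - 1)) * \<gamma> ^ ((k - l) * (n - 1))
         + \<beta> * inverse \<gamma> ^ l * (1 * aa Q U k l * \<gamma> ^ nat ((i - int k) mod int n) * 1 * \<gamma> ^ ((k - l + 1) * (n - 1)))
         + aa Q U k (l - 1) * 1 * \<gamma> ^ ((Suc k - l) * (n - 1)))"
      unfolding IH1 IH2 S1[OF n2 k1] S2[OF n2 k1] S3[OF n2 k1] hscale_single e[symmetric] single_add ..
    also have "aa Q U k l * - (\<gamma> ^ (n - 1)) * \<gamma> ^ ((k - l) * (n - 1))
         + \<beta> * inverse \<gamma> ^ l * (1 * aa Q U k l * \<gamma> ^ nat ((i - int k) mod int n) * 1 * \<gamma> ^ ((k - l + 1) * (n - 1)))
         + aa Q U k (l - 1) * 1 * \<gamma> ^ ((Suc k - l) * (n - 1)) = aa Q U (Suc k) l"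
    proof -
      obtain d where kd: "k = l + d" using 2 by (metis le_add_diff_inverse less_Suc_eq_le)
      have A: "aa Q U (Suc k) l = Q ^ Suc d * ((U * Q ^ (k + l) - 1) * aa Q U k l + aa Q U k (l - 1))"
        using 2 kd by simp
      show ?thesis
        unfolding A G gpow Q_def[symmetric] e[symmetric] invg using kd
        by (simp add: U_def algebra_simps power_add)
    qed
    finally show ?thesis using 2 unfolding ik e by (simp add: Q_def U_def)
  next
    case 3
    have IH: "cel n w \<gamma> \<beta> r i k k = Poly_Mapping.single (kk n w r (i - int k) 0) (aa Q U k k)"
      using Suc.IH[of k] kn unfolding Q_def U_def by simp
    have "cel n w \<gamma> \<beta> r i (Suc k) l = hmult n w \<gamma> (cel n w \<gamma> \<beta> r i k k) (hSg n w)" using 3 by simp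
    also have "\<dots> = Poly_Mapping.single (kk n w r (i - int k - 1) 0) (aa Q U k k * 1 * \<gamma> ^ (0 * (n - 1)))"
      unfolding IH by (rule S3[OF n2]) (use n2 in simp)
    finally show ?thesis using 3 unfolding ik by (simp add: Q_def U_def)
  qed
qed



lemma M1: "mono_mult (Suc 0) w \<gamma> s (a, 0, 0) (b, 0, 0) = Poly_Mapping.single (a + b, 0, 0) s"
  by (simp add: mono_mult_def Let_def)

lemma case_n1:
  fixes \<gamma> \<beta> :: "'k::field"
  assumes "0 < w" "\<beta> \<noteq> 1"
  shows "cel (Suc 0) w \<gamma> \<beta> r i 1 0 \<noteq> 0"
proof -
  define a where "a = r + int w * i"
  have X: "hxg (Suc 0) w r i = Poly_Mapping.single (a, 0, 0) 1" by (simp add: hxg_def a_def)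
  have Sg: "hSg (Suc 0) w = Poly_Mapping.single (- int w, 0, 0) 1" by (simp add: hSg_def hxg_def)
  have Y: "hy (Suc 0) w = Poly_Mapping.single (0, 0, 0) 1 - Poly_Mapping.single (int w, 0, 0) 1" by (simp add: hy_def)
  have Sy: "hSy (Suc 0) w \<gamma> = - (Poly_Mapping.single (- int w, 0, 0) 1 - Poly_Mapping.single (0, 0, 0) 1)"
    by (simp add: hSy_def Y Sg hmult_diff_left hmult_single M1)
  have "cel (Suc 0) w \<gamma> \<beta> r i 1 0 = hmult (Suc 0) w \<gamma> (hxg (Suc 0) w r i) (hSy (Suc 0) w \<gamma>)
     + hscale \<beta> (hmult (Suc 0) w \<gamma> (hmult (Suc 0) w \<gamma> (hy (Suc 0) w) (hxg (Suc 0) w r i)) (hSg (Suc 0) w))"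
    by simp
  also have "\<dots> = - (Poly_Mapping.single (a - int w, 0, 0) 1 - Poly_Mapping.single (a, 0, 0) 1)
     + hscale \<beta> (Poly_Mapping.single (a - int w, 0, 0) 1 - Poly_Mapping.single (a, 0, 0) 1)"
    unfolding X Sy Y Sg by (simp add: hmult_diff_left hmult_diff_right hmult_uminus_right hmult_single M1 algebra_simps)
  finally have "Poly_Mapping.lookup (cel (Suc 0) w \<gamma> \<beta> r i 1 0) (a, 0, 0) = 1 - \<beta>"
    using assms by (simp add: lookup_add lookup_minus lookup_hscale lookup_single when_def)
  then show ?thesis using assms by auto
qed

theorem lemma3p14:
  fixes n w :: nat and \<gamma> \<beta> :: "'k::field_char_0" and r i :: int
  assumes "algebraically_closed TYPE('k)"
    and "0 < n" and "0 < w"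
    and "primitive_root n \<gamma>"
    and "\<beta> \<noteq> 0" and "\<beta> ^ n \<noteq> 1"
  shows "(\<forall>k\<le>n. cel n w \<gamma> \<beta> r i k 0 \<noteq> 0) \<and>
         (\<forall>l. 1 \<le> l \<and> l \<le> n - 1 \<longrightarrow> cel n w \<gamma> \<beta> r i n l = 0)"
proof (cases "n = 1")
  case True
  have b1: "\<beta> \<noteq> 1" using assms True by auto
  have "cel n w \<gamma> \<beta> r i k 0 \<noteq> 0" if "k \<le> n" for k
  proof (cases k)
    case 0
    have "Poly_Mapping.single (r + int w * (i div int n), nat (i mod int n), 0) (1::'k) \<noteq> 0"
      by (metis lookup_single_eq lookup_zero zero_neq_one)
    then show ?thesis using 0 by (simp add: hxg_def)
  next
    case (Suc k') then have "k = 1" using that True by simp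
    then show ?thesis using case_n1[OF assms(3) b1] True by simp
  qed
  then show ?thesis using True by auto
next
  case False
  have n2: "2 \<le> n" using False assms by simp
  have gn: "\<gamma> ^ n = 1" and gprim: "\<And>m. 0 < m \<Longrightarrow> m < n \<Longrightarrow> \<gamma> ^ m \<noteq> 1"
    using assms(4) unfolding primitive_root_def by auto
  define Q where "Q = \<gamma> ^ (n - 1)"
  define U where "U = \<beta> * \<gamma> ^ nat (i mod int n)"
  have g0: "\<gamma> \<noteq> 0" using gn assms(2) by (metis power_0_left less_not_refl2 zero_neq_one)
  have Qg: "Q * \<gamma> = 1" unfolding Q_def using gn assms(2) by (metis power_Suc2 Suc_diff_1)
  have Q0: "Q \<noteq> 0" using Qg by auto
  have Qn: "Q ^ n = 1" unfolding Q_def by (metis gn power_mult mult.commute power_one)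
  have Qj: "Q ^ j \<noteq> 1" if "0 < j" "j < n" for j
  proof
    assume "Q ^ j = 1"
    moreover have "Q ^ j * \<gamma> ^ j = 1" using Qg by (metis power_mult_distrib power_one)
    ultimately have "\<gamma> ^ j = 1" by simp
    then show False using gprim that by blast
  qed
  have Uj: "U * Q ^ j \<noteq> 1" for j
  proof
    assume "U * Q ^ j = 1"
    then have "(U * Q ^ j) ^ n = 1" by simp
    moreover have "(U * Q ^ j) ^ n = \<beta> ^ n"
    proof -
      have "(U * Q ^ j) ^ n = \<beta> ^ n * (\<gamma> ^ n) ^ nat (i mod int n) * (Q ^ n) ^ j"
        unfolding U_def by (simp add: power_mult_distrib flip: power_mult) (simp add: mult.commute)
      then show ?thesis using gn Qn by simp
    qed
    ultimately show False using assms(6) by simp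
  qed
  have form: "k \<le> n \<Longrightarrow> l \<le> k \<Longrightarrow> k - l < n \<Longrightarrow>
      cel n w \<gamma> \<beta> r i k l = Poly_Mapping.single (kk n w r (i - int k) (k - l)) (aa Q U k l)" for k l
    unfolding Q_def U_def by (rule cel_form[OF n2 gn])
  have part2: "cel n w \<gamma> \<beta> r i n l = 0" if "1 \<le> l" "l \<le> n - 1" for l
  proof -
    have "aa Q U n l = 0" by (rule aa_vanish[OF Qn Qj]) (use that n2 in auto)
    then show ?thesis using form[of n l] that n2 by simp
  qed
  have part1: "cel n w \<gamma> \<beta> r i k 0 \<noteq> 0" if "k \<le> n" for k
  proof (cases "k < n")
    case True
    have "aa Q U k 0 \<noteq> 0" by (rule aa_nz0[OF Q0 Uj])
    moreover have "Poly_Mapping.lookup (cel n w \<gamma> \<beta> r i k 0) (kk n w r (i - int k) k) = aa Q U k 0"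
      using form[of k 0] True by simp
    ultimately show ?thesis by auto
  next
    case False
    then have kn: "k = n" using that by simp
    obtain m where m: "n = Suc m" using assms(2) by (cases n) auto
    have m1: "m + 1 = n" using m by simp
    have IH: "cel n w \<gamma> \<beta> r i m 0 = Poly_Mapping.single (kk n w r (i - int m) m) (aa Q U m 0)"
      using form[of m 0] m by simp
    define s where "s = aa Q U m 0"
    define P where "P = kk n w r (i - int m - 1) 0"
    define P' where "P' = kk n w (r + int w) (i - int m - 1) 0"
    have PP: "P' \<noteq> P" unfolding P_def P'_def kk_def using assms(3) by simp
    have "cel n w \<gamma> \<beta> r i n 0 = hmult n w \<gamma> (cel n w \<gamma> \<beta> r i m 0) (hSy n w \<gamma>)
        + hscale \<beta> (hmult n w \<gamma> (hmult n w \<gamma> (hy n w) (cel n w \<gamma> \<beta> r i m 0)) (hSg n w))"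
      using m by simp
    also have "\<dots> = (Poly_Mapping.single P (s * - (\<gamma> ^ (n - 1)) * \<gamma> ^ (m * (n - 1)))
        - Poly_Mapping.single P' (s * - (\<gamma> ^ (n - 1)) * \<gamma> ^ (m * (n - 1))))
      + hscale \<beta> (Poly_Mapping.single P (1 * s * \<gamma> ^ nat ((i - int m) mod int n) * 1 * \<gamma> ^ (0 * (n - 1)))
        - Poly_Mapping.single P' (1 * s * \<gamma> ^ nat ((i - int m) mod int n) * 1 * \<gamma> ^ (0 * (n - 1))))"
      unfolding IH S1R[OF n2 m1] S2R[OF n2 m1] P_def P'_def s_def ..
    finally have "Poly_Mapping.lookup (cel n w \<gamma> \<beta> r i n 0) P
       = s * - (\<gamma> ^ (n - 1)) * \<gamma> ^ (m * (n - 1)) + \<beta> * (s * \<gamma> ^ nat ((i - int m) mod int n))"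
      using PP by (simp add: lookup_add lookup_minus lookup_hscale lookup_single when_def)
    also have "\<dots> = aa Q U n 0"
    proof -
      have G: "\<gamma> ^ nat ((i - int m) mod int n) = \<gamma> ^ nat (i mod int n) * Q ^ m"
        unfolding Q_def by (rule GQ[OF gn assms(2)])
      have Qsm: "Q ^ Suc m = 1" using Qn m by simp
      have A: "aa Q U n 0 = Q ^ Suc m * (U * Q ^ m - 1) * s" unfolding m s_def by simp
      have B0: "s * - Q * Q ^ m = - (s * Q ^ Suc m)" by (simp add: algebra_simps)
      have B: "s * - (\<gamma> ^ (n - 1)) * \<gamma> ^ (m * (n - 1)) = - s"
        unfolding gpow Q_def[symmetric] B0 Qsm by simp
      show ?thesis unfolding B A Qsm G by (simp add: U_def algebra_simps)
    qed
    finally have "Poly_Mapping.lookup (cel n w \<gamma> \<beta> r i n 0) P = aa Q U n 0" .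
    moreover have "aa Q U n 0 \<noteq> 0" by (rule aa_nz0[OF Q0 Uj])
    ultimately show ?thesis using kn by auto
  qed
  show ?thesis using part1 part2 by auto
qed

end
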